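(* Let $X=(X_0,X_1)$ be an infinite tree of bounded valence in which every vertex has at least three neighbours, let $\Gamma<\operatorname{Aut}(X)$ be a subgroup of automorphisms such that $\Gamma\backslash X_0$ is finite, and let $p:X_0\times X_0\to[0,1]$ be a $\Gamma$-invariant transition kernel making $(X_0,p)$ an irreducible Markov chain, of finite range: there is an integer $k\geq 0$ with $p(x,y)=0$ whenever $d(x,y)>k$. Let $x,y\in X_0$ and suppose that for every integer $M\geq 0$ there exists a $p$-admissible path $(\omega_0,\dots,\omega_n)\in\mathcal{P}h(x,y;\{y\}^\complement)$ with $\max_i d(\omega_i,y)\geq M$. Then the radius of convergence $R_F(x,y)$ of the first-passage generating function $F_z(x,y)$ equals $R$.
   Context: $d$ is the graph distance on $X_0$. A $p$-admissible path is a finite sequence of vertices $(\omega_0,\dots,\omega_n)$ with $p(\omega_{i-1},\omega_i)>0$ for $1\leq i\leq n$; its weight at $z$ is $w_z(\gamma)=z^n\prod_{i=1}^n p(\omega_{i-1},\omega_i)$. $\mathcal{P}h(x,y;\{y\}^\complement)$ denotes the set of $p$-admissible paths $(\omega_0,\dots,\omega_n)$ with $\omega_0=x$, $\omega_n=y$ and $\omega_i\neq y$ for $0<i<n$. The first-passage generating function is $F_z(x,y)=\sum_{\gamma\in\mathcal{P}h(x,y;\{y\}^\complement)}w_z(\gamma)=\sum_{n\geq 0}p^{(n)}(x,y;\{y\}^\complement)z^n$, and $R_F(x,y)$ is its radius of convergence. $R$ is the radius of convergence of the Green function $G_z(x',y')=\sum_{n\geq 0}p^{(n)}(x',y')z^n$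 (where $p^{(n)}$ is the $n$-step transition probability), which by irreducibility does not depend on $x',y'$. *)

theory Defs
  imports "HOL-Analysis.Analysis"
begin

(* Graphs: vertex set X_0 is the whole type 'v, edges given by a relation E. *)

definition is_walk :: "('v \<Rightarrow> 'v \<Rightarrow> bool) \<Rightarrow> 'v list \<Rightarrow> bool" where
  "is_walk E xs \<longleftrightarrow> xs \<noteq> [] \<and> (\<forall>i. Suc i < length xs \<longrightarrow> E (xs ! i) (xs ! Suc i))"

(* a cycle: closed walk (v_0,...,v_n), n >= 3, v_0 = v_n, v_0..v_{n-1} distinct *)
definition is_cycle :: "('v \<Rightarrow> 'v \<Rightarrow> bool) \<Rightarrow> 'v list \<Rightarrow> bool" where
  "is_cycle E xs \<longleftrightarrow> is_walk E xs \<and> length xs \<ge> 4 \<and> hd xs = last xs \<and> distinct (butlast xs)"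

definition is_tree :: "('v \<Rightarrow> 'v \<Rightarrow> bool) \<Rightarrow> bool" where
  "is_tree E \<longleftrightarrow> (\<forall>x y. E x y \<longrightarrow> E y x) \<and> (\<forall>x. \<not> E x x)
     \<and> (\<forall>x y. \<exists>xs. is_walk E xs \<and> hd xs = x \<and> last xs = y)
     \<and> (\<nexists>xs. is_cycle E xs)"

definition gdist :: "('v \<Rightarrow> 'v \<Rightarrow> bool) \<Rightarrow> 'v \<Rightarrow> 'v \<Rightarrow> nat" where
  "gdist E x y = (LEAST n. \<exists>xs. is_walk E xs \<and> hd xs = x \<and> last xs = y \<and> length xs = Suc n)"

definition bounded_valence :: "('v \<Rightarrow> 'v \<Rightarrow> bool) \<Rightarrow> bool" where
  "bounded_valence E \<longleftrightarrow> (\<exists>K::nat. \<forall>x. finite {y. E x y} \<and> card {y. E x y} \<le> K)"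

definition graph_aut :: "('v \<Rightarrow> 'v \<Rightarrow> bool) \<Rightarrow> ('v \<Rightarrow> 'v) set" where
  "graph_aut E = {g. bij g \<and> (\<forall>x y. E x y \<longleftrightarrow> E (g x) (g y))}"

definition aut_subgroup :: "('v \<Rightarrow> 'v \<Rightarrow> bool) \<Rightarrow> ('v \<Rightarrow> 'v) set \<Rightarrow> bool" where
  "aut_subgroup E \<Gamma> \<longleftrightarrow> \<Gamma> \<subseteq> graph_aut E \<and> id \<in> \<Gamma>
     \<and> (\<forall>g\<in>\<Gamma>. \<forall>h\<in>\<Gamma>. g \<circ> h \<in> \<Gamma>) \<and> (\<forall>g\<in>\<Gamma>. inv g \<in> \<Gamma>)"

definition orbits :: "('v \<Rightarrow> 'v) set \<Rightarrow> 'v set set" where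
  "orbits \<Gamma> = (\<lambda>x. (\<lambda>g. g x) ` \<Gamma>) ` UNIV"

definition transition_kernel :: "('v \<Rightarrow> 'v \<Rightarrow> real) \<Rightarrow> bool" where
  "transition_kernel p \<longleftrightarrow> (\<forall>x y. 0 \<le> p x y \<and> p x y \<le> 1) \<and> (\<forall>x. (p x has_sum 1) UNIV)"

fun nstep :: "('v \<Rightarrow> 'v \<Rightarrow> real) \<Rightarrow> nat \<Rightarrow> 'v \<Rightarrow> 'v \<Rightarrow> real" where
  "nstep p 0 x y = (if x = y then 1 else 0)"
| "nstep p (Suc n) x y = (\<Sum>\<^sub>\<infinity>w. p x w * nstep p n w y)"

definition irreducible_chain :: "('v \<Rightarrow> 'v \<Rightarrow> real) \<Rightarrow> bool" where
  "irreducible_chain p \<longleftrightarrow> (\<forall>x y. \<exists>n. nstep p n x y > 0)"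

definition invariant_kernel :: "('v \<Rightarrow> 'v) set \<Rightarrow> ('v \<Rightarrow> 'v \<Rightarrow> real) \<Rightarrow> bool" where
  "invariant_kernel \<Gamma> p \<longleftrightarrow> (\<forall>g\<in>\<Gamma>. \<forall>x y. p (g x) (g y) = p x y)"

(* p-admissible path (omega_0,...,omega_n) as a nonempty list of length n+1 *)
definition admissible :: "('v \<Rightarrow> 'v \<Rightarrow> real) \<Rightarrow> 'v list \<Rightarrow> bool" where
  "admissible p \<gamma> \<longleftrightarrow> \<gamma> \<noteq> [] \<and> (\<forall>i. Suc i < length \<gamma> \<longrightarrow> p (\<gamma> ! i) (\<gamma> ! Suc i) > 0)"

definition first_passage_paths :: "('v \<Rightarrow> 'v \<Rightarrow> real) \<Rightarrow> 'v \<Rightarrow> 'v \<Rightarrow> 'v list set" where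
  "first_passage_paths p x y = {\<gamma>. admissible p \<gamma> \<and> hd \<gamma> = x \<and> last \<gamma> = y
      \<and> (\<forall>i. 0 < i \<and> Suc i < length \<gamma> \<longrightarrow> \<gamma> ! i \<noteq> y)}"

definition path_prob :: "('v \<Rightarrow> 'v \<Rightarrow> real) \<Rightarrow> 'v list \<Rightarrow> real" where
  "path_prob p \<gamma> = (\<Prod>i<length \<gamma> - 1. p (\<gamma> ! i) (\<gamma> ! Suc i))"

definition first_passage_coeff :: "('v \<Rightarrow> 'v \<Rightarrow> real) \<Rightarrow> 'v \<Rightarrow> 'v \<Rightarrow> nat \<Rightarrow> real" where
  "first_passage_coeff p x y n =
     (\<Sum>\<^sub>\<infinity>\<gamma>\<in>{\<gamma>\<in>first_passage_paths p x y. length \<gamma> = Suc n}. path_prob p \<gamma>)"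

definition RF :: "('v \<Rightarrow> 'v \<Rightarrow> real) \<Rightarrow> 'v \<Rightarrow> 'v \<Rightarrow> ereal" where
  "RF p x y = conv_radius (first_passage_coeff p x y)"

definition green_radius :: "('v \<Rightarrow> 'v \<Rightarrow> real) \<Rightarrow> 'v \<Rightarrow> 'v \<Rightarrow> ereal" where
  "green_radius p x y = conv_radius (\<lambda>n. nstep p n x y)"

end

theory Submission
  imports Defs
begin

definition rchain :: "('a \<Rightarrow> 'a \<Rightarrow> bool) \<Rightarrow> 'a list \<Rightarrow> bool" where
  "rchain R xs \<longleftrightarrow> xs \<noteq> [] \<and> (\<forall>i. Suc i < length xs \<longrightarrow> R (xs ! i) (xs ! Suc i))"

lemma walk_rchain: "is_walk E = rchain E"
  by (auto simp: fun_eq_iff is_walk_def rchain_def)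
lemma adm_rchain: "admissible p = rchain (\<lambda>a b. 0 < p a b)"
  by (auto simp: fun_eq_iff admissible_def rchain_def)

lemma rchain_single[simp]: "rchain R [a]"
  by (simp add: rchain_def)

lemma rchain_Cons_Cons[simp]: "rchain R (a # b # xs) \<longleftrightarrow> R a b \<and> rchain R (b # xs)"
  apply (auto simp: rchain_def)
  using less_Suc_eq_0_disj by fastforce

lemma rchain_Cons: "rchain R (a # xs) \<longleftrightarrow> xs = [] \<or> (R a (hd xs) \<and> rchain R xs)"
  by (cases xs) auto

lemma rchain_append:
  "rchain R xs \<Longrightarrow> rchain R ys \<Longrightarrow> last xs = hd ys \<Longrightarrow> rchain R (xs @ tl ys)"
proof (induction xs)
  case Nil then show ?case by (simp add: rchain_def)
next
  case (Cons a xs)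
  show ?case
  proof (cases xs)
    case Nil
    then show ?thesis using Cons by (cases ys) auto
  next
    case (Cons b zs)
    then show ?thesis using Cons.prems Cons.IH by auto
  qed
qed

lemma rchain_take: "rchain R xs \<Longrightarrow> 0 < n \<Longrightarrow> rchain R (take n xs)"
  by (auto simp: rchain_def)

lemma rchain_drop: "rchain R xs \<Longrightarrow> n < length xs \<Longrightarrow> rchain R (drop n xs)"
  by (auto simp: rchain_def)

lemma finite_rchain:
  assumes "\<And>u. finite {v. R u v}"
  shows "finite {xs. rchain R xs \<and> length xs = Suc n \<and> hd xs = u}"
proof (induction n arbitrary: u)
  case 0
  have "{xs. rchain R xs \<and> length xs = Suc 0 \<and> hd xs = u} \<subseteq> {[u]}"
    by (auto simp: length_Suc_conv)
  then show ?case using finite_subset by blast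
next
  case (Suc n)
  have "{xs. rchain R xs \<and> length xs = Suc (Suc n) \<and> hd xs = u} \<subseteq>
     (\<lambda>(v,ys). u # ys) ` Sigma {v. R u v} (\<lambda>v. {xs. rchain R xs \<and> length xs = Suc n \<and> hd xs = v})"
  proof
    fix xs assume "xs \<in> {xs. rchain R xs \<and> length xs = Suc (Suc n) \<and> hd xs = u}"
    then obtain b zs where xs: "xs = u # b # zs" "length zs = n" "R u b" "rchain R (b # zs)"
      by (auto simp: length_Suc_conv)
    then show "xs \<in> (\<lambda>(v,ys). u # ys) ` Sigma {v. R u v} (\<lambda>v. {xs. rchain R xs \<and> length xs = Suc n \<and> hd xs = v})"
      by (auto intro!: image_eqI[of _ _ "(b, b # zs)"])
  qed
  moreover have "finite (Sigma {v. R u v} (\<lambda>v. {xs. rchain R xs \<and> length xs = Suc n \<and> hd xs = v}))"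
    using assms Suc by auto
  ultimately show ?case using finite_subset by blast
qed

lemma pp_single[simp]: "path_prob p [a] = 1"
  by (simp add: path_prob_def)

lemma pp_Cons[simp]: "path_prob p (a # b # xs) = p a b * path_prob p (b # xs)"
proof -
  have "length (a # b # xs) - 1 = Suc (length xs)" by simp
  then show ?thesis unfolding path_prob_def
    by (simp only: prod.lessThan_Suc_shift) simp
qed

lemma pp_append:
  "xs \<noteq> [] \<Longrightarrow> ys \<noteq> [] \<Longrightarrow> last xs = hd ys \<Longrightarrow> path_prob p (xs @ tl ys) = path_prob p xs * path_prob p ys"
proof (induction xs)
  case Nil then show ?case by simp
next
  case (Cons a xs)
  show ?case
  proof (cases xs)
    case Nil
    then show ?thesis using Cons by (cases ys) auto
  next
    case (Cons b zs)
    then show ?thesis using Cons.prems Cons.IH by auto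
  qed
qed

lemma pp_Cons': "ys \<noteq> [] \<Longrightarrow> path_prob p (a # ys) = p a (hd ys) * path_prob p ys"
  by (cases ys) auto

definition paths :: "('v \<Rightarrow> 'v \<Rightarrow> real) \<Rightarrow> nat \<Rightarrow> 'v \<Rightarrow> 'v \<Rightarrow> 'v list set" where
  "paths p n u v = {\<gamma>. admissible p \<gamma> \<and> length \<gamma> = Suc n \<and> hd \<gamma> = u \<and> last \<gamma> = v}"

locale kern =
  fixes p :: "'v \<Rightarrow> 'v \<Rightarrow> real"
  assumes pnn: "\<And>u v. 0 \<le> p u v"
    and pfin: "\<And>u. finite {v. 0 < p u v}"
begin

lemma finite_paths: "finite (paths p n u v)"
proof -
  have "paths p n u v \<subseteq> {xs. rchain (\<lambda>a b. 0 < p a b) xs \<and> length xs = Suc n \<and> hd xs = u}"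
    by (auto simp: paths_def adm_rchain)
  then show ?thesis using finite_rchain[of "\<lambda>a b. 0 < p a b", OF pfin] finite_subset by blast
qed

lemma pp_nonneg: "0 \<le> path_prob p \<gamma>"
  unfolding path_prob_def by (intro prod_nonneg) (simp add: pnn)

lemma pp_pos: "admissible p \<gamma> \<Longrightarrow> 0 < path_prob p \<gamma>"
  unfolding path_prob_def admissible_def by (intro prod_pos) auto

lemma infsum_fin:
  assumes "finite S" "\<And>x. x \<notin> S \<Longrightarrow> f x = 0"
  shows "infsum f UNIV = sum f S"
proof -
  have "infsum f UNIV = infsum f S"
    by (rule infsum_cong_neutral) (use assms in auto)
  then show ?thesis using assms by simp
qed

lemma paths_Suc: "paths p (Suc n) u v =
   (\<lambda>(w,\<gamma>). u # \<gamma>) ` Sigma {w. 0 < p u w} (\<lambda>w. paths p n w v)"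
proof
  show "paths p (Suc n) u v \<subseteq> (\<lambda>(w,\<gamma>). u # \<gamma>) ` Sigma {w. 0 < p u w} (\<lambda>w. paths p n w v)"
  proof
    fix xs assume "xs \<in> paths p (Suc n) u v"
    then obtain b zs where xs: "xs = u # b # zs" "length zs = n" "0 < p u b" "admissible p (b # zs)"
       "last (b # zs) = v"
      by (auto simp: length_Suc_conv paths_def adm_rchain)
    then show "xs \<in> (\<lambda>(w,\<gamma>). u # \<gamma>) ` Sigma {w. 0 < p u w} (\<lambda>w. paths p n w v)"
      by (auto intro!: image_eqI[of _ _ "(b, b # zs)"] simp: paths_def)
  qed
next
  show "(\<lambda>(w,\<gamma>). u # \<gamma>) ` Sigma {w. 0 < p u w} (\<lambda>w. paths p n w v) \<subseteq> paths p (Suc n) u v"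
    by (auto simp: paths_def adm_rchain rchain_Cons)
qed

lemma nstep_paths: "nstep p n u v = (\<Sum>\<gamma>\<in>paths p n u v. path_prob p \<gamma>)"
proof (induction n arbitrary: u)
  case 0
  have "paths p 0 u v = (if u = v then {[u]} else {})"
    by (auto simp: paths_def length_Suc_conv admissible_def)
  then show ?case by simp
next
  case (Suc n)
  have "nstep p (Suc n) u v = (\<Sum>w\<in>{w. 0 < p u w}. p u w * nstep p n w v)"
    unfolding nstep.simps
    by (rule infsum_fin[OF pfin]) (metis mem_Collect_eq mult_eq_0_iff order_less_le pnn)
  also have "\<dots> = (\<Sum>w\<in>{w. 0 < p u w}. \<Sum>\<gamma>\<in>paths p n w v. path_prob p (u # \<gamma>))"
    unfolding Suc
    by (intro sum.cong refl) (auto simp: sum_distrib_left paths_def intro!: sum.cong, subst pp_Cons', auto simp: admissible_def)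
  also have "\<dots> = (\<Sum>(w,\<gamma>)\<in>Sigma {w. 0 < p u w} (\<lambda>w. paths p n w v). path_prob p (u # \<gamma>))"
    by (rule sum.Sigma) (auto simp: pfin finite_paths)
  also have "\<dots> = (\<Sum>\<gamma>\<in>paths p (Suc n) u v. path_prob p \<gamma>)"
    unfolding paths_Suc
    by (subst sum.reindex) (auto simp: inj_on_def paths_def case_prod_unfold)
  finally show ?case .
qed

lemma nstep_nonneg: "0 \<le> nstep p n u v"
  unfolding nstep_paths by (intro sum_nonneg pp_nonneg)

lemma concat_bound:
  assumes "finite U" "finite S" "finite T"
    and S: "\<And>s. s \<in> S \<Longrightarrow> length s = a \<and> s \<noteq> [] \<and> last s = m"
    and T: "\<And>t. t \<in> T \<Longrightarrow> t \<noteq> [] \<and> hd t = m"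
    and U: "\<And>s t. s \<in> S \<Longrightarrow> t \<in> T \<Longrightarrow> s @ tl t \<in> U"
  shows "(\<Sum>s\<in>S. path_prob p s) * (\<Sum>t\<in>T. path_prob p t) \<le> (\<Sum>u\<in>U. path_prob p u)"
proof -
  have "(\<Sum>s\<in>S. path_prob p s) * (\<Sum>t\<in>T. path_prob p t) = (\<Sum>(s,t)\<in>S\<times>T. path_prob p s * path_prob p t)"
    by (simp add: sum_product sum.cartesian_product)
  also have "\<dots> = (\<Sum>(s,t)\<in>S\<times>T. path_prob p (s @ tl t))"
    by (intro sum.cong refl) (auto simp: pp_append S T)
  also have "\<dots> = (\<Sum>u\<in>(\<lambda>(s,t). s @ tl t) ` (S\<times>T). path_prob p u)"
  proof (subst sum.reindex)
    show "inj_on (\<lambda>(s,t). s @ tl t) (S \<times> T)"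
    proof (clarsimp simp: inj_on_def)
      fix s t s' t' assume a: "s \<in> S" "t \<in> T" "s' \<in> S" "t' \<in> T" "s @ tl t = s' @ tl t'"
      then have "length s = length s'" using S by auto
      then have "s = s'" "tl t = tl t'" using a(5) by auto
      moreover have "hd t = hd t'" "t \<noteq> []" "t' \<noteq> []" using T a by auto
      ultimately show "s = s' \<and> t = t'" by (metis list.collapse)
    qed
  qed (simp add: case_prod_unfold)
  also have "\<dots> \<le> (\<Sum>u\<in>U. path_prob p u)"
    by (rule sum_mono2) (use assms in \<open>auto simp: pp_nonneg\<close>)
  finally show ?thesis .
qed

end


lemma last_append_tl: "xs \<noteq> [] \<Longrightarrow> ys \<noteq> [] \<Longrightarrow> last xs = hd ys \<Longrightarrow> last (xs @ tl ys) = last ys"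
  by (cases ys) auto

lemma hd_append_tl: "xs \<noteq> [] \<Longrightarrow> hd (xs @ tl ys) = hd xs"
  by simp

lemma gdist_walk:
  assumes conn: "\<forall>a b. \<exists>xs. is_walk E xs \<and> hd xs = a \<and> last xs = b"
  shows "\<exists>xs. is_walk E xs \<and> hd xs = a \<and> last xs = b \<and> length xs = Suc (gdist E a b)"
proof -
  obtain xs where xs: "is_walk E xs" "hd xs = a" "last xs = b" using conn by blast
  then have "xs \<noteq> []" by (simp add: is_walk_def)
  then have "\<exists>n. \<exists>xs. is_walk E xs \<and> hd xs = a \<and> last xs = b \<and> length xs = Suc n"
    using xs by (intro exI[of _ "length xs - 1"] exI[of _ xs]) auto
  then show ?thesis unfolding gdist_def by (rule LeastI_ex)
qed

lemma gdist_le: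
  "is_walk E xs \<Longrightarrow> hd xs = a \<Longrightarrow> last xs = b \<Longrightarrow> gdist E a b \<le> length xs - 1"
  unfolding gdist_def by (rule Least_le) (auto simp: is_walk_def)

lemma gdist_self: "gdist E a a = 0"
  using gdist_le[of E "[a]" a a] by (simp add: is_walk_def)

lemma finite_ball:
  assumes conn: "\<forall>a b. \<exists>xs. is_walk E xs \<and> hd xs = a \<and> last xs = b"
    and bv: "bounded_valence E"
  shows "finite {b. gdist E a b \<le> k}"
proof -
  have fn: "\<And>u. finite {v. E u v}" using bv by (auto simp: bounded_valence_def)
  have "{b. gdist E a b \<le> k} \<subseteq> last ` (\<Union>j\<le>k. {xs. rchain E xs \<and> length xs = Suc j \<and> hd xs = a})"
  proof
    fix b assume "b \<in> {b. gdist E a b \<le> k}"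
    moreover obtain xs where "is_walk E xs" "hd xs = a" "last xs = b" "length xs = Suc (gdist E a b)"
      using gdist_walk[OF conn] by blast
    ultimately show "b \<in> last ` (\<Union>j\<le>k. {xs. rchain E xs \<and> length xs = Suc j \<and> hd xs = a})"
      by (auto simp: walk_rchain)
  qed
  moreover have "finite (\<Union>j\<le>k. {xs. rchain E xs \<and> length xs = Suc j \<and> hd xs = a})"
    using finite_rchain[of E, OF fn] by auto
  ultimately show ?thesis using finite_subset by blast
qed

lemma adm_dist:
  assumes conn: "\<forall>a b. \<exists>xs. is_walk E xs \<and> hd xs = a \<and> last xs = b"
    and fr: "\<forall>u v. gdist E u v > k \<longrightarrow> p u v = 0"
    and adm: "admissible p \<gamma>" and j: "j < length \<gamma>"
  shows "gdist E (hd \<gamma>) (\<gamma> ! j) \<le> j * k"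
proof -
  have "\<exists>xs. is_walk E xs \<and> hd xs = hd \<gamma> \<and> last xs = \<gamma> ! j \<and> length xs \<le> Suc (j * k)"
    using j
  proof (induction j)
    case 0
    then show ?case using adm by (intro exI[of _ "[hd \<gamma>]"]) (auto simp: is_walk_def admissible_def hd_conv_nth)
  next
    case (Suc j)
    then obtain xs where xs: "is_walk E xs" "hd xs = hd \<gamma>" "last xs = \<gamma> ! j" "length xs \<le> Suc (j * k)"
      by auto
    obtain ws where ws: "is_walk E ws" "hd ws = \<gamma> ! j" "last ws = \<gamma> ! Suc j"
       "length ws = Suc (gdist E (\<gamma> ! j) (\<gamma> ! Suc j))"
      using gdist_walk[OF conn] by blast
    have "p (\<gamma> ! j) (\<gamma> ! Suc j) > 0" using adm Suc.prems by (auto simp: admissible_def)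
    then have "gdist E (\<gamma> ! j) (\<gamma> ! Suc j) \<le> k" using fr by (metis less_irrefl not_le)
    moreover have "xs \<noteq> []" "ws \<noteq> []" using xs ws by (auto simp: is_walk_def)
    ultimately show ?case using xs ws
      by (intro exI[of _ "xs @ tl ws"]) (auto simp: walk_rchain rchain_append last_append_tl)
  qed
  then obtain xs where "is_walk E xs" "hd xs = hd \<gamma>" "last xs = \<gamma> ! j" "length xs \<le> Suc (j * k)"
    by blast
  then show ?thesis using gdist_le[of E xs] by fastforce
qed


lemma nstep_inv:
  assumes "bij g" "\<And>x y. p (g x) (g y) = p x y"
  shows "nstep p n (g u) (g v) = nstep p n u v"
proof (induction n arbitrary: u)
  case 0
  then show ?case using assms(1) by (auto simp: bij_def inj_eq)
next
  case (Suc n)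
  have bb: "bij_betw g UNIV UNIV" using assms(1) by (simp add: bij_def bij_betw_def)
  have "nstep p (Suc n) (g u) (g v) = (\<Sum>\<^sub>\<infinity>w. p (g u) (g w) * nstep p n (g w) (g v))"
    by (simp add: infsum_reindex_bij_betw[OF bb, of "\<lambda>w. p (g u) w * nstep p n w (g v)"])
  also have "\<dots> = nstep p (Suc n) u v" by (simp add: assms(2) Suc)
  finally show ?case .
qed

context kern begin

lemma ck: "nstep p a u m * nstep p b m v \<le> nstep p (a + b) u v"
  unfolding nstep_paths
proof (rule concat_bound[where a = "Suc a" and m = m])
  fix s t assume s: "s \<in> paths p a u m" and t: "t \<in> paths p b m v"
  then have ne: "s \<noteq> []" "t \<noteq> []" by (auto simp: paths_def admissible_def)
  have "rchain (\<lambda>a b. 0 < p a b) (s @ tl t)"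
    using s t by (intro rchain_append) (auto simp: paths_def adm_rchain)
  then show "s @ tl t \<in> paths p (a + b) u v"
    using s t ne by (auto simp: paths_def adm_rchain last_append_tl)
qed (simp_all add: finite_paths, auto simp: paths_def admissible_def)

end
context kern begin
definition "FPn x y n = {\<gamma>\<in>first_passage_paths p x y. length \<gamma> = Suc n}"

lemma FPn_sub: "FPn x y n \<subseteq> paths p n x y"
  by (auto simp: FPn_def first_passage_paths_def paths_def)

lemma finite_FPn: "finite (FPn x y n)"
  by (rule finite_subset[OF FPn_sub finite_paths])

lemma fpc: "first_passage_coeff p x y n = (\<Sum>\<gamma>\<in>FPn x y n. path_prob p \<gamma>)"
proof -
  have "first_passage_coeff p x y n = infsum (path_prob p) (FPn x y n)"
    unfolding first_passage_coeff_def FPn_def by simp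
  then show ?thesis using finite_FPn[of x y n] by simp
qed

lemma fpc_nonneg: "0 \<le> first_passage_coeff p x y n"
  unfolding fpc by (intro sum_nonneg pp_nonneg)

lemma fpc_le: "first_passage_coeff p x y n \<le> nstep p n x y"
  unfolding fpc nstep_paths by (rule sum_mono2[OF finite_paths FPn_sub pp_nonneg])


lemma diverge:
  assumes conn: "\<forall>a b. \<exists>xs. is_walk E xs \<and> hd xs = a \<and> last xs = b"
    and fr: "\<forall>u v. gdist E u v > k \<longrightarrow> p u v = 0"
    and r: "0 < r"
    and NN: "\<forall>w. \<exists>n\<le>N. 1 < nstep p n w w * r ^ n"
    and far: "\<forall>M::nat. \<exists>\<gamma>\<in>first_passage_paths p x y. \<exists>i<length \<gamma>. gdist E (\<gamma> ! i) y \<ge> M"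
  shows "\<not> summable (\<lambda>n. first_passage_coeff p x y n * r ^ n)"
proof
  assume summ: "summable (\<lambda>n. first_passage_coeff p x y n * r ^ n)"
  obtain \<gamma> i where \<gamma>: "\<gamma> \<in> first_passage_paths p x y" and i: "i < length \<gamma>"
    and gd: "N * k + 1 \<le> gdist E (\<gamma> ! i) y"
    using far by blast
  define w where "w = \<gamma> ! i"
  have wy: "w \<noteq> y" using gd gdist_self[of E y] unfolding w_def by auto
  obtain n where nN: "n \<le> N" and nq: "1 < nstep p n w w * r ^ n" using NN by blast
  have n0: "0 < n" using nq by (cases n) auto
  define q where "q = nstep p n w w"
  have q0: "0 \<le> q" unfolding q_def by (rule nstep_nonneg)
  have avoid: "y \<notin> set l" if l: "l \<in> paths p n w w" for l
  proof
    assume "y \<in> set l"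
    then obtain j where j: "j < length l" "l ! j = y" by (auto simp: in_set_conv_nth)
    have "gdist E (hd l) (l ! j) \<le> j * k"
      using l j by (intro adm_dist[OF conn fr]) (auto simp: paths_def)
    moreover have "j * k \<le> N * k" using j l nN by (intro mult_le_mono1) (auto simp: paths_def)
    moreover have "hd l = w" using l by (simp add: paths_def)
    ultimately show False using j gd unfolding w_def by simp
  qed
  define Lm where "Lm m = {l\<in>paths p (m*n) w w. y \<notin> set l}" for m
  have finLm: "finite (Lm m)" for m
    unfolding Lm_def by (rule finite_subset[OF _ finite_paths[of "m*n" w w]]) auto
  have loops: "q ^ m \<le> (\<Sum>l\<in>Lm m. path_prob p l)" for m
  proof (induction m)
    case 0
    have "Lm 0 = {[w]}"
      using wy by (auto simp: Lm_def paths_def length_Suc_conv admissible_def)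
    then show ?case by simp
  next
    case (Suc m)
    have "q ^ Suc m \<le> (\<Sum>l\<in>Lm m. path_prob p l) * q"
      using Suc q0 by (simp add: mult_left_mono mult.commute)
    also have "\<dots> \<le> (\<Sum>l\<in>Lm (Suc m). path_prob p l)"
      unfolding q_def nstep_paths
    proof (rule concat_bound[where a = "Suc (m*n)" and m = w])
      fix s t assume s: "s \<in> Lm m" and t: "t \<in> paths p n w w"
      then have ne: "s \<noteq> []" "t \<noteq> []" by (auto simp: Lm_def paths_def admissible_def)
      have "rchain (\<lambda>a b. 0 < p a b) (s @ tl t)"
        using s t by (intro rchain_append) (auto simp: Lm_def paths_def adm_rchain)
      moreover have "y \<notin> set (tl t)" using avoid[OF t] ne list.set_sel(2)[of t] by blast
      ultimately show "s @ tl t \<in> Lm (Suc m)"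
        using s t ne by (auto simp: Lm_def paths_def adm_rchain last_append_tl)
    qed (simp_all add: finLm finite_paths, auto simp: Lm_def paths_def admissible_def)
    finally show ?case .
  qed
  have ga: "admissible p \<gamma>" "hd \<gamma> = x" "last \<gamma> = y"
    and ginner: "\<And>j. 0 < j \<Longrightarrow> Suc j < length \<gamma> \<Longrightarrow> \<gamma> ! j \<noteq> y"
    using \<gamma> by (auto simp: first_passage_paths_def)
  have gne: "\<gamma> \<noteq> []" using ga by (simp add: admissible_def)
  have ilt: "Suc i < length \<gamma>"
  proof (rule ccontr)
    assume "\<not> Suc i < length \<gamma>"
    then have "i = length \<gamma> - 1" using i by auto
    then have "w = last \<gamma>" using gne by (simp add: w_def last_conv_nth)
    then show False using wy ga by simp
  qed
  define pre where "pre = take (Suc i) \<gamma>"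
  define suf where "suf = drop i \<gamma>"
  have pre: "pre \<noteq> []" "length pre = Suc i" "admissible p pre" "hd pre = x" "last pre = w"
    "\<And>j. j < Suc i \<Longrightarrow> pre ! j = \<gamma> ! j"
    using ilt ga gne unfolding pre_def w_def
    by (auto simp: adm_rchain rchain_take last_conv_nth hd_conv_nth)
  have suf: "suf \<noteq> []" "length suf = length \<gamma> - i" "admissible p suf" "hd suf = w" "last suf = y"
    "\<And>j. j < length suf \<Longrightarrow> suf ! j = \<gamma> ! (i + j)"
    using ilt ga gne i unfolding suf_def w_def
    by (auto simp: adm_rchain rchain_drop hd_drop_conv_nth)
  define U1 where "U1 m = {d\<in>paths p (i + m*n) x w. \<forall>j. 0 < j \<and> j < length d \<longrightarrow> d ! j \<noteq> y}" for m
  have finU1: "finite (U1 m)" for m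
    unfolding U1_def by (rule finite_subset[OF _ finite_paths[of "i + m*n" x w]]) auto
  define J where "J m = i + m * n + (length \<gamma> - 1 - i)" for m
  have step1: "path_prob p pre * (\<Sum>l\<in>Lm m. path_prob p l) \<le> (\<Sum>d\<in>U1 m. path_prob p d)" for m
  proof -
    have "(\<Sum>s\<in>{pre}. path_prob p s) * (\<Sum>l\<in>Lm m. path_prob p l) \<le> (\<Sum>d\<in>U1 m. path_prob p d)"
    proof (rule concat_bound[where a = "Suc i" and m = w])
      fix s t assume s: "s \<in> {pre}" and t: "t \<in> Lm m"
      then have ne: "t \<noteq> []" and tl: "admissible p t" "length t = Suc (m*n)" "hd t = w" "last t = w"
        "y \<notin> set t"
        by (auto simp: Lm_def paths_def admissible_def)
      have "rchain (\<lambda>a b. 0 < p a b) (pre @ tl t)"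
        using pre tl by (intro rchain_append) (auto simp: adm_rchain)
      moreover have "(pre @ tl t) ! j \<noteq> y" if "0 < j" "j < length (pre @ tl t)" for j
      proof (cases "j < Suc i")
        case True
        then show ?thesis using pre(2,6) ginner[of j] that ilt by (simp add: nth_append)
      next
        case False
        then have "(pre @ tl t) ! j = tl t ! (j - Suc i)" using pre(2) by (simp add: nth_append)
        moreover have "j - Suc i < length (tl t)" using that False pre(2) by simp
        ultimately have "(pre @ tl t) ! j \<in> set t"
          using ne by (metis nth_mem list.set_sel(2))
        then show ?thesis using tl by auto
      qed
      ultimately show "s @ tl t \<in> U1 m"
        using s pre tl ne by (auto simp: U1_def paths_def adm_rchain last_append_tl)
    qed (use pre in \<open>simp_all add: finLm finU1\<close>, auto simp: Lm_def paths_def admissible_def)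
    then show ?thesis by simp
  qed
  have step2: "(\<Sum>d\<in>U1 m. path_prob p d) * path_prob p suf \<le> first_passage_coeff p x y (J m)" for m
  proof -
    have "(\<Sum>d\<in>U1 m. path_prob p d) * (\<Sum>s\<in>{suf}. path_prob p s) \<le> (\<Sum>z\<in>FPn x y (J m). path_prob p z)"
    proof (rule concat_bound[where a = "Suc (i + m*n)" and m = w])
      fix d t assume d: "d \<in> U1 m" and t: "t \<in> {suf}"
      then have t: "t = suf" by simp
      from d have dd: "d \<noteq> []" "admissible p d" "length d = Suc (i + m*n)" "hd d = x" "last d = w"
        "\<And>j. 0 < j \<Longrightarrow> j < length d \<Longrightarrow> d ! j \<noteq> y"
        by (auto simp: U1_def paths_def admissible_def)
      have "rchain (\<lambda>a b. 0 < p a b) (d @ tl suf)"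
        using dd suf by (intro rchain_append) (auto simp: adm_rchain)
      moreover have "(d @ tl suf) ! j \<noteq> y" if "0 < j" "Suc j < length (d @ tl suf)" for j
      proof (cases "j < length d")
        case True
        then show ?thesis using dd that by (simp add: nth_append)
      next
        case False
        have len: "length (d @ tl suf) = length d + (length \<gamma> - i) - 1" using suf ilt by simp
        have "(d @ tl suf) ! j = tl suf ! (j - length d)" using False by (simp add: nth_append)
        also have "\<dots> = suf ! Suc (j - length d)" using that False len suf(2) ilt
          by (subst nth_tl) auto
        also have "\<dots> = \<gamma> ! (i + Suc (j - length d))" using that False len suf(2) ilt
          by (intro suf(6)) auto
        finally show ?thesis using ginner[of "i + Suc (j - length d)"] that False len ilt by auto
      qed
      ultimately show "d @ tl t \<in> FPn x y (J m)"
        using dd suf ilt t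
        by (auto simp: FPn_def first_passage_paths_def adm_rchain last_append_tl J_def)
    qed (use suf in \<open>simp_all add: finU1 finite_FPn\<close>, auto simp: U1_def paths_def admissible_def)
    then show ?thesis by (simp add: fpc)
  qed
  define C where "C = path_prob p pre * path_prob p suf * r ^ (length \<gamma> - 1)"
  have C0: "0 < C" unfolding C_def using pre suf r by (simp add: pp_pos)
  have bound: "C \<le> first_passage_coeff p x y (J m) * r ^ (J m)" for m
  proof -
    have "path_prob p pre * q ^ m * path_prob p suf \<le> first_passage_coeff p x y (J m)"
    proof -
      have "path_prob p pre * q ^ m \<le> (\<Sum>d\<in>U1 m. path_prob p d)"
        using step1[of m] loops[of m] pp_nonneg[of pre]
        by (meson mult_left_mono order_trans)
      then have "path_prob p pre * q ^ m * path_prob p suf \<le> (\<Sum>d\<in>U1 m. path_prob p d) * path_prob p suf"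
        by (rule mult_right_mono) (rule pp_nonneg)
      then show ?thesis using step2[of m] by linarith
    qed
    have rJ: "r ^ (J m) = r ^ (length \<gamma> - 1) * (r ^ n) ^ m"
    proof -
      have "J m = (length \<gamma> - 1) + n * m" unfolding J_def using ilt by (simp add: mult.commute)
      then show ?thesis by (simp add: power_add power_mult)
    qed
    have "1 \<le> (q * r ^ n) ^ m" using nq unfolding q_def by (intro one_le_power) simp
    then have "C \<le> C * (q * r ^ n) ^ m" using C0 by simp
    also have "\<dots> = (path_prob p pre * q ^ m * path_prob p suf) * r ^ (J m)"
      unfolding C_def rJ by (simp add: power_mult_distrib)
    also have "\<dots> \<le> first_passage_coeff p x y (J m) * r ^ (J m)"
      using \<open>path_prob p pre * q ^ m * path_prob p suf \<le> first_passage_coeff p x y (J m)\<close> r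
      by (intro mult_right_mono) auto
    finally show ?thesis .
  qed
  have "strict_mono J" unfolding strict_mono_def J_def using n0 by simp
  have "(\<lambda>n. first_passage_coeff p x y n * r ^ n) \<longlonglongrightarrow> 0"
    by (rule summable_LIMSEQ_zero[OF summ])
  from LIMSEQ_subseq_LIMSEQ[OF this \<open>strict_mono J\<close>]
  have "(\<lambda>m. first_passage_coeff p x y (J m) * r ^ (J m)) \<longlonglongrightarrow> 0" by (simp add: o_def)
  then have "C \<le> 0" by (rule LIMSEQ_le_const) (use bound in blast)
  then show False using C0 by simp
qed

end

theorem proposition3p8:
  fixes E :: "'v \<Rightarrow> 'v \<Rightarrow> bool"
    and \<Gamma> :: "('v \<Rightarrow> 'v) set"
    and p :: "'v \<Rightarrow> 'v \<Rightarrow> real"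
    and x y :: 'v
  assumes tree: "is_tree E"
    and inf: "infinite (UNIV :: 'v set)"
    and bv: "bounded_valence E"
    and deg3: "\<forall>v. card {w. E v w} \<ge> 3"
    and grp: "aut_subgroup E \<Gamma>"
    and cofinite: "finite (orbits \<Gamma>)"
    and kernel: "transition_kernel p"
    and inv: "invariant_kernel \<Gamma> p"
    and irr: "irreducible_chain p"
    and finrange: "\<exists>k::nat. \<forall>u v. gdist E u v > k \<longrightarrow> p u v = 0"
    and far: "\<forall>M::nat. \<exists>\<gamma>\<in>first_passage_paths p x y.
                 \<exists>i<length \<gamma>. gdist E (\<gamma> ! i) y \<ge> M"
  shows "RF p x y = green_radius p x y"
proof -
  obtain k :: nat where fr: "\<forall>u v. gdist E u v > k \<longrightarrow> p u v = 0" using finrange by blast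
  have conn: "\<forall>a b. \<exists>xs. is_walk E xs \<and> hd xs = a \<and> last xs = b"
    using tree by (simp add: is_tree_def)
  have pnn: "\<And>u v. 0 \<le> p u v" using kernel by (simp add: transition_kernel_def)
  have pfin: "finite {v. 0 < p u v}" for u
  proof (rule finite_subset[OF _ finite_ball[OF conn bv, of u k]])
    show "{v. 0 < p u v} \<subseteq> {b. gdist E u b \<le> k}" using fr by (metis (mono_tags, lifting) less_irrefl mem_Collect_eq not_le subsetI)
  qed
  interpret kern p using pnn pfin by unfold_locales auto
  define R where "R = green_radius p x y"
  have R0: "0 \<le> R" unfolding R_def green_radius_def by (rule conv_radius_nonneg)
  have ge: "R \<le> RF p x y"
    unfolding RF_def R_def green_radius_def
  proof (rule conv_radius_geI_ex')
    fix r :: real assume r: "0 < r" "ereal r < conv_radius (\<lambda>n. nstep p n x y)"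
    have "summable (\<lambda>n. norm (nstep p n x y * r ^ n))"
      by (rule abs_summable_in_conv_radius) (use r in simp)
    then show "summable (\<lambda>n. first_passage_coeff p x y n * of_real r ^ n)"
    proof (rule summable_comparison_test')
      fix n :: nat
      show "norm (first_passage_coeff p x y n * of_real r ^ n) \<le> norm (nstep p n x y * r ^ n)"
        using r fpc_nonneg[of x y n] fpc_le[of x y n] nstep_nonneg[of n x y]
        by (simp add: abs_mult mult_right_mono)
    qed
  qed
  have le: "RF p x y \<le> R"
    unfolding RF_def
  proof (rule conv_radius_leI_ex'[OF R0])
    fix r :: real assume r: "0 < r" "R < ereal r"
    have ub: "\<exists>n. B < nstep p n x y * r ^ n" for B
    proof (rule ccontr)
      assume "\<not> (\<exists>n. B < nstep p n x y * r ^ n)"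
      then have Bb: "\<And>n. nstep p n x y * r ^ n \<le> B" by (simp add: not_less)
      obtain r' where r': "R < ereal r'" "ereal r' < ereal r" using ereal_dense2[OF r(2)] by blast
      have r'0: "0 < r'" proof -
        have "ereal 0 < ereal r'" using order_le_less_trans[OF R0 r'(1)] by (simp add: zero_ereal_def)
        then show ?thesis by simp
      qed
      have r'r: "r' < r" using r' by simp
      have "summable (\<lambda>n. nstep p n x y * r' ^ n)"
      proof (rule summable_comparison_test')
        show "summable (\<lambda>n. B * (r' / r) ^ n)"
          using r'0 r'r r by (intro summable_mult summable_geometric) simp
        fix n :: nat
        have "norm (nstep p n x y * r' ^ n) = nstep p n x y * r' ^ n"
          using r'0 nstep_nonneg[of n x y] by simp
        also have "\<dots> = (nstep p n x y * r ^ n) * (r' / r) ^ n"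
          using r by (simp add: power_divide)
        also have "\<dots> \<le> B * (r' / r) ^ n"
          by (rule mult_right_mono[OF Bb]) (use r r'0 in simp)
        finally show "norm (nstep p n x y * r' ^ n) \<le> B * (r' / r) ^ n" .
      qed
      from conv_radius_geI[OF this] have "ereal r' \<le> R" using r'0 by (simp add: R_def green_radius_def)
      then show False using r' by simp
    qed
    have loopv: "\<exists>n. 1 < nstep p n v v * r ^ n" for v
    proof -
      obtain a where a: "0 < nstep p a v x" using irr by (auto simp: irreducible_chain_def)
      obtain b where b: "0 < nstep p b y v" using irr by (auto simp: irreducible_chain_def)
      define \<alpha> where "\<alpha> = nstep p a v x * r ^ a"
      define \<beta> where "\<beta> = nstep p b y v * r ^ b"
      have \<alpha>0: "0 < \<alpha>" and \<beta>0: "0 < \<beta>" using a b r unfolding \<alpha>_def \<beta>_def by auto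
      obtain n where n: "1 / (\<alpha> * \<beta>) < nstep p n x y * r ^ n" using ub by blast
      have "nstep p a v x * nstep p n x y * nstep p b y v \<le> nstep p (a + n + b) v v"
        by (rule order_trans[OF mult_right_mono[OF ck nstep_nonneg] ck])
      then have "nstep p a v x * nstep p n x y * nstep p b y v * r ^ (a + n + b) \<le> nstep p (a + n + b) v v * r ^ (a + n + b)"
        using r by (intro mult_right_mono) auto
      moreover have "nstep p a v x * nstep p n x y * nstep p b y v * r ^ (a + n + b) = \<alpha> * \<beta> * (nstep p n x y * r ^ n)"
        unfolding \<alpha>_def \<beta>_def by (simp add: power_add algebra_simps)
      moreover have "1 < \<alpha> * \<beta> * (nstep p n x y * r ^ n)"
        using n \<alpha>0 \<beta>0 by (simp add: field_simps)
      ultimately show ?thesis by (intro exI[of _ "a + n + b"]) linarith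
    qed
    define nf where "nf v = (SOME n. 1 < nstep p n v v * r ^ n)" for v
    have nf: "1 < nstep p (nf v) v v * r ^ (nf v)" for v
      unfolding nf_def using loopv[of v] by (rule someI_ex)
    define orb where "orb w = (\<lambda>g. g w) ` \<Gamma>" for w
    define rep where "rep Ob = (SOME u. orb u = Ob)" for Ob
    define N where "N = Max ((\<lambda>Ob. nf (rep Ob)) ` orbits \<Gamma>)"
    have NN: "\<forall>w. \<exists>n\<le>N. 1 < nstep p n w w * r ^ n"
    proof
      fix w
      have Ob: "orb w \<in> orbits \<Gamma>" unfolding orbits_def orb_def by simp
      define v where "v = rep (orb w)"
      have ov: "orb v = orb w" unfolding v_def rep_def by (rule someI[of _ w]) simp
      have "id \<in> \<Gamma>" using grp by (simp add: aut_subgroup_def)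
      then have "w \<in> orb w" unfolding orb_def by (rule rev_image_eqI) simp
      then have "w \<in> orb v" using ov by simp
      then obtain g where g: "g \<in> \<Gamma>" "w = g v" unfolding orb_def by blast
      have "bij g" using g grp by (auto simp: aut_subgroup_def graph_aut_def)
      have ginv: "\<And>a b. p (g a) (g b) = p a b" using inv g by (simp add: invariant_kernel_def)
      have eq: "nstep p (nf v) w w = nstep p (nf v) v v"
        unfolding g(2) by (rule nstep_inv[of g p, OF \<open>bij g\<close> ginv])
      have "nf v \<le> N" unfolding N_def v_def using Ob cofinite by (intro Max_ge) auto
      then show "\<exists>n\<le>N. 1 < nstep p n w w * r ^ n" using nf[of v] eq by auto
    qed
    have "\<not> summable (\<lambda>n. first_passage_coeff p x y n * r ^ n)"
      by (rule diverge[OF conn fr r(1) NN far])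
    then show "\<not> summable (\<lambda>n. first_passage_coeff p x y n * of_real r ^ n)" by simp
  qed
  show ?thesis using ge le unfolding R_def by (rule antisym[rotated])
qed

end
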